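(* There is an absolute constant $c>0$ such that for every $n\ge 1$ and $N=2^n$ there is a 2D SLP with at most $c\cdot n$ nonterminals deriving $\mathsf{ShiftBin}_N$.
   Context: Alphabet $\Sigma\supseteq\{0,1,\$\}$. A 2D string of size $p\times q$ is a $p\times q$ array over $\Sigma$. For $N=2^n$, $\mathsf{Bin}_N$ is the $N\times(n+2)$ 2D string whose $i$-th row ($i\in[1..N]$) is $\$\,b_{i-1}\,\$$, where $b_{i-1}$ is the $n$-bit binary representation of $i-1$. $\mathsf{ShiftBin}_N$ is the $2N\times N(n+2)$ 2D string such that for each $j\in[1..N]$, the subarray formed by rows $j,\dots,j+N-1$ and columns $(j-1)(n+2)+1,\dots,j(n+2)$ equals $\mathsf{Bin}_N$ (i.e., the $j$-th copy of $\mathsf{Bin}_N$ shifted down by $j-1$ rows), and all other entries are $0$. A 2D SLP is a triple $(\mathcal V,\mathcal S,\rho)$: a finite set $\mathcal V$ of nonterminals each with a dimension (height, width), a starting nonterminal $\mathcal S$, and for each $X\in\mathcal V$ a production $\rho(X)$ which is a character $\sigma\in\Sigma$ ($X$ of size $1\times1$), or a horizontal concatenation $Y\oplus_{\mathrm h}Z$ ($Y$ and $Z$ of equal height, $Z$ placed to the right of $Y$), or a vertical concatenation $Y\oplus_{\mathrm v}Z$ ($Y,Z$ of equal width, $Z$ placed below $Y$), with $Y,Z\in\mathcal V$ and the occurrence relation acyclic; it derives the 2D string $\exp(\mathcal S)$ obtained by recursive expansion. *)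

theory Defs
  imports Complex_Main
begin

text \<open>Alphabet: the three relevant characters 0, 1 and the separator.\<close>
datatype sym = S0 | S1 | SD

text \<open>2D strings are lists of rows (row-major); a p x q string is a list of p rows each of length q.\<close>
type_synonym str2d = "sym list list"

text \<open>Productions of a 2D SLP. Nonterminals are the indices 0..length-1 of a rule list;
  acyclicity is enforced by requiring right-hand sides to refer to smaller indices.\<close>
datatype rule = Leaf sym | HCat nat nat | VCat nat nat

function expand :: "rule list \<Rightarrow> nat \<Rightarrow> str2d option" where
  "expand rs i =
     (if i < length rs then
        (case rs ! i of
           Leaf c \<Rightarrow> Some [[c]]
         | HCat j k \<Rightarrow>
             (if j < i \<and> k < i then
                (case (expand rs j, expand rs k) of
                   (Some A, Some B) \<Rightarrow>
                     (if length A = length B then Some (map2 (@) A B) else None)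
                 | _ \<Rightarrow> None)
              else None)
         | VCat j k \<Rightarrow>
             (if j < i \<and> k < i then
                (case (expand rs j, expand rs k) of
                   (Some A, Some B) \<Rightarrow>
                     (if length (hd A) = length (hd B) then Some (A @ B) else None)
                 | _ \<Rightarrow> None)
              else None))
      else None)"
  by pat_completeness auto
termination by (relation "measure snd") auto

text \<open>n-bit binary representation of m, most significant bit first.\<close>
definition bits :: "nat \<Rightarrow> nat \<Rightarrow> sym list" where
  "bits n m = map (\<lambda>k. if bit m (n - 1 - k) then S1 else S0) [0..<n]"

text \<open>Row a (0-based) of Bin_N, N = 2^n.\<close>
definition binrow :: "nat \<Rightarrow> nat \<Rightarrow> sym list" where
  "binrow n a = [SD] @ bits n a @ [SD]"

definition Bin :: "nat \<Rightarrow> str2d" where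
  "Bin n = map (binrow n) [0..<2^n]"

text \<open>ShiftBin_N, 0-based: entry (r,c) lies in copy j = c div (n+2); it equals the Bin entry
  at row r - j, column c mod (n+2) when j \<le> r < j + N, and 0 otherwise.\<close>
definition ShiftBin :: "nat \<Rightarrow> str2d" where
  "ShiftBin n =
     map (\<lambda>r. map (\<lambda>c. let j = c div (n + 2); t = c mod (n + 2) in
                         if j \<le> r \<and> r < j + 2^n then binrow n (r - j) ! t else S0)
               [0..<2^n * (n + 2)])
         [0..<2 * 2^n]"

end

theory Submission
  imports Defs
begin

declare expand.simps[simp del]

definition gen :: "rule list \<Rightarrow> nat \<Rightarrow> str2d \<Rightarrow> bool" where
  "gen rs i A \<longleftrightarrow> i < length rs \<and> expand rs i = Some A"

definition mk :: "nat \<Rightarrow> nat \<Rightarrow> (nat \<Rightarrow> nat \<Rightarrow> sym) \<Rightarrow> str2d" where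
  "mk h w f = map (\<lambda>r. map (\<lambda>c. f r c) [0..<w]) [0..<h]"

lemma expand_append:
  "i < length rs \<Longrightarrow> expand (rs @ ts) i = expand rs i"
proof (induction i rule: less_induct)
  case (less i)
  have e1: "expand (rs @ ts) i = (case rs ! i of
           Leaf c \<Rightarrow> Some [[c]]
         | HCat j k \<Rightarrow>
             (if j < i \<and> k < i then
                (case (expand (rs @ ts) j, expand (rs @ ts) k) of
                   (Some A, Some B) \<Rightarrow>
                     (if length A = length B then Some (map2 (@) A B) else None)
                 | _ \<Rightarrow> None)
              else None)
         | VCat j k \<Rightarrow>
             (if j < i \<and> k < i then
                (case (expand (rs @ ts) j, expand (rs @ ts) k) of
                   (Some A, Some B) \<Rightarrow>
                     (if length (hd A) = length (hd B) then Some (A @ B) else None)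
                 | _ \<Rightarrow> None)
              else None))"
    using less.prems by (subst expand.simps) (simp add: nth_append)
  have e2: "expand rs i = (case rs ! i of
           Leaf c \<Rightarrow> Some [[c]]
         | HCat j k \<Rightarrow>
             (if j < i \<and> k < i then
                (case (expand rs j, expand rs k) of
                   (Some A, Some B) \<Rightarrow>
                     (if length A = length B then Some (map2 (@) A B) else None)
                 | _ \<Rightarrow> None)
              else None)
         | VCat j k \<Rightarrow>
             (if j < i \<and> k < i then
                (case (expand rs j, expand rs k) of
                   (Some A, Some B) \<Rightarrow>
                     (if length (hd A) = length (hd B) then Some (A @ B) else None)
                 | _ \<Rightarrow> None)
              else None))"
    using less.prems by (subst expand.simps) simp
  show ?case unfolding e1 e2
    using less.IH less.prems by (cases "rs ! i") auto
qed

lemma gen_ext: "gen rs i A \<Longrightarrow> gen (rs @ ts) i A"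
  unfolding gen_def using expand_append by auto

lemma gen_leaf: "gen (rs @ [Leaf s]) (length rs) [[s]]"
  unfolding gen_def by (subst expand.simps) simp

lemma gen_hcat0:
  assumes "gen rs j A" "gen rs k B" "length A = length B"
  shows "gen (rs @ [HCat j k]) (length rs) (map2 (@) A B)"
  using assms unfolding gen_def by (subst expand.simps[of _ "length rs"]) (simp add: expand_append del: expand.simps)

lemma gen_vcat0:
  assumes "gen rs j A" "gen rs k B" "length (hd A) = length (hd B)"
  shows "gen (rs @ [VCat j k]) (length rs) (A @ B)"
  using assms unfolding gen_def by (subst expand.simps[of _ "length rs"]) (simp add: expand_append del: expand.simps)

lemma mk_cong: "(\<And>r c. r < h \<Longrightarrow> c < w \<Longrightarrow> f r c = g r c) \<Longrightarrow> mk h w f = mk h w g"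
  unfolding mk_def by auto

lemma mk_hcat: "map2 (@) (mk h w1 f) (mk h w2 g) = mk h (w1+w2) (\<lambda>r c. if c < w1 then f r c else g r (c - w1))"
  unfolding mk_def
  by (auto intro!: nth_equalityI simp: nth_append)

lemma mk_vcat: "mk h1 w f @ mk h2 w g = mk (h1+h2) w (\<lambda>r c. if r < h1 then f r c else g (r - h1) c)"
  unfolding mk_def
  by (auto intro!: nth_equalityI simp: nth_append)

lemma length_mk[simp]: "length (mk h w f) = h"
  unfolding mk_def by simp

lemma hd_mk: "h > 0 \<Longrightarrow> length (hd (mk h w f)) = w"
  unfolding mk_def by (simp add: hd_map)

lemma gen_leaf_mk: "gen (rs @ [Leaf s]) (length rs) (mk 1 1 (\<lambda>_ _. s))"
  using gen_leaf[of rs s] by (simp add: mk_def)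

lemma gen_hcat:
  assumes "gen rs j (mk h w1 f)" "gen rs k (mk h w2 g)" "w = w1 + w2"
    "\<And>r c. r < h \<Longrightarrow> c < w \<Longrightarrow> F r c = (if c < w1 then f r c else g r (c - w1))"
  shows "gen (rs @ [HCat j k]) (length rs) (mk h w F)"
proof -
  have "gen (rs @ [HCat j k]) (length rs) (map2 (@) (mk h w1 f) (mk h w2 g))"
    by (rule gen_hcat0[OF assms(1,2)]) simp
  also have "map2 (@) (mk h w1 f) (mk h w2 g) = mk h w (\<lambda>r c. if c < w1 then f r c else g r (c - w1))"
    unfolding mk_hcat assms(3) ..
  also have "\<dots> = mk h w F"
    by (rule mk_cong) (simp add: assms(4))
  finally show ?thesis .
qed

lemma gen_vcat:
  assumes "gen rs j (mk h1 w f)" "gen rs k (mk h2 w g)" "h = h1 + h2" "h1 > 0" "h2 > 0"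
    "\<And>r c. r < h \<Longrightarrow> c < w \<Longrightarrow> F r c = (if r < h1 then f r c else g (r - h1) c)"
  shows "gen (rs @ [VCat j k]) (length rs) (mk h w F)"
proof -
  have "gen (rs @ [VCat j k]) (length rs) (mk h1 w f @ mk h2 w g)"
    by (rule gen_vcat0[OF assms(1,2)]) (simp add: hd_mk assms(4,5))
  also have "mk h1 w f @ mk h2 w g = mk h w (\<lambda>r c. if r < h1 then f r c else g (r - h1) c)"
    unfolding mk_vcat assms(3) ..
  also have "\<dots> = mk h w F"
    by (rule mk_cong) (simp add: assms(6))
  finally show ?thesis .
qed

lemma zrow: "\<exists>ts i. gen (rs @ ts) i (mk 1 (Suc m) (\<lambda>_ _. S0)) \<and> length ts = 2 * m + 1"
proof (induction m)
  case 0
  show ?case using gen_leaf_mk[of rs S0] by (intro exI[of _ "[Leaf S0]"]) auto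
next
  case (Suc m)
  then obtain ts i where g: "gen (rs @ ts) i (mk 1 (Suc m) (\<lambda>_ _. S0))" and l: "length ts = 2 * m + 1"
    by blast
  let ?rs1 = "rs @ ts @ [Leaf S0]"
  have g1: "gen ?rs1 i (mk 1 (Suc m) (\<lambda>_ _. S0))" using gen_ext[OF g, of "[Leaf S0]"] by simp
  have g2: "gen ?rs1 (length (rs @ ts)) (mk 1 1 (\<lambda>_ _. S0))" using gen_leaf_mk[of "rs @ ts" S0] by simp
  have "gen (?rs1 @ [HCat i (length (rs @ ts))]) (length ?rs1) (mk 1 (Suc (Suc m)) (\<lambda>_ _. S0))"
    by (rule gen_hcat[OF g1 g2]) auto
  then show ?case using l
    by (intro exI[of _ "ts @ [Leaf S0, HCat i (length (rs @ ts))]"] exI[of _ "length ?rs1"]) simp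
qed

lemma col: "\<exists>ts i. gen (rs @ ts) i (mk (2^k) 1 (\<lambda>_ _. s)) \<and> length ts = k + 1"
proof (induction k)
  case 0
  show ?case using gen_leaf_mk[of rs s] by (intro exI[of _ "[Leaf s]"]) auto
next
  case (Suc k)
  then obtain ts i where g: "gen (rs @ ts) i (mk (2^k) 1 (\<lambda>_ _. s))" and l: "length ts = k + 1"
    by blast
  have "gen ((rs @ ts) @ [VCat i i]) (length (rs @ ts)) (mk (2^Suc k) 1 (\<lambda>_ _. s))"
    by (rule gen_vcat[OF g g]) auto
  then show ?case using l by (intro exI[of _ "ts @ [VCat i i]"] exI[of _ "length (rs @ ts)"]) simp
qed


definition binp :: "nat \<Rightarrow> str2d" where
  "binp k = mk (2^k) k (\<lambda>r c. if bit r (k - 1 - c) then S1 else S0)"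

lemma hb1: "(r::nat) < 2^m \<Longrightarrow> \<not> bit r m"
  by (simp add: bit_iff_odd)

lemma hb2: "2^m \<le> (r::nat) \<Longrightarrow> r < 2^(Suc m) \<Longrightarrow> bit r m"
proof -
  assume a: "2^m \<le> r" "r < 2^(Suc m)"
  have "r div 2^m = 1" using a by (intro div_nat_eqI) auto
  then show ?thesis by (simp add: bit_iff_odd)
qed

lemma hb3: "p < m \<Longrightarrow> bit ((r::nat) + 2^m) p = bit r p"
proof -
  assume a: "p < m"
  have "(r + 2^m) div 2^p = r div 2^p + 2^(m-p)"
  proof -
    have "(2::nat)^m = 2^p * 2^(m-p)" using a by (simp flip: power_add)
    then show ?thesis by simp
  qed
  moreover have "even ((2::nat)^(m-p))" using a by simp
  ultimately show ?thesis by (simp add: bit_iff_odd)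
qed


lemma binp_pt:
  fixes r :: nat
  assumes "r < 2^Suc (Suc k)" "c < Suc (Suc k)"
  shows "(if bit r (Suc (Suc k) - 1 - c) then S1 else S0) =
    (if r < 2^Suc k then (if c < 1 then S0 else (if bit r (Suc k - 1 - (c - 1)) then S1 else S0))
     else (if c < 1 then S1 else (if bit (r - 2^Suc k) (Suc k - 1 - (c - 1)) then S1 else S0)))"
proof (cases "c = 0")
  case True
  then show ?thesis using hb1[of r "Suc k"] hb2[of "Suc k" r] assms by auto
next
  case False
  have e: "Suc (Suc k) - 1 - c = Suc k - 1 - (c - 1)" using False by simp
  have p: "Suc k - 1 - (c - 1) < Suc k" by simp
  show ?thesis
  proof (cases "r < 2^Suc k")
    case True
    then show ?thesis using False e by simp
  next
    case F2: False
    then obtain r' where r: "r = r' + 2^Suc k" by (metis add.commute le_add_diff_inverse not_less)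
    show ?thesis using False F2 e hb3[OF p, of r'] r by simp
  qed
qed

lemma binp_ex: "\<exists>ts i0 i1 ib. gen (rs @ ts) i0 (mk (2^k) 1 (\<lambda>_ _. S0)) \<and> gen (rs @ ts) i1 (mk (2^k) 1 (\<lambda>_ _. S1))
   \<and> gen (rs @ ts) ib (binp (Suc k)) \<and> length ts = 5 * k + 3"
proof (induction k)
  case 0
  let ?L = "length rs"
  have a: "gen (rs @ [Leaf S0]) ?L (mk 1 (Suc 0) (\<lambda>_ _. S0))" using gen_leaf_mk by simp
  have b: "gen ((rs @ [Leaf S0]) @ [Leaf S1]) (Suc ?L) (mk 1 (Suc 0) (\<lambda>_ _. S1))"
    using gen_leaf_mk[of "rs @ [Leaf S0]" S1] by simp
  have a': "gen ((rs @ [Leaf S0]) @ [Leaf S1]) ?L (mk 1 (Suc 0) (\<lambda>_ _. S0))" by (rule gen_ext[OF a])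
  have c: "gen (((rs @ [Leaf S0]) @ [Leaf S1]) @ [VCat ?L (Suc ?L)]) (length ((rs @ [Leaf S0]) @ [Leaf S1])) (binp (Suc 0))"
    unfolding binp_def by (rule gen_vcat[OF a' b]) (auto simp: less_2_cases_iff bit_iff_odd)
  show ?case
    apply (rule exI[of _ "[Leaf S0, Leaf S1, VCat ?L (Suc ?L)]"])
    apply (rule exI[of _ "?L"])
    apply (rule exI[of _ "Suc ?L"])
    apply (rule exI[of _ "Suc (Suc ?L)"])
    using gen_ext[OF a', of "[VCat ?L (Suc ?L)]"] gen_ext[OF b, of "[VCat ?L (Suc ?L)]"] c
    by (simp add: mk_def)
next
  case (Suc k)
  then obtain ts i0 i1 ib where g0: "gen (rs @ ts) i0 (mk (2^k) 1 (\<lambda>_ _. S0))"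
    and g1: "gen (rs @ ts) i1 (mk (2^k) 1 (\<lambda>_ _. S1))"
    and gb: "gen (rs @ ts) ib (binp (Suc k))" and l: "length ts = 5 * k + 3" by blast
  define R where "R = rs @ ts"
  define L where "L = length R"
  define R1 where "R1 = R @ [VCat i0 i0]"
  define R2 where "R2 = R1 @ [VCat i1 i1]"
  define R3 where "R3 = R2 @ [HCat L ib]"
  define R4 where "R4 = R3 @ [HCat (Suc L) ib]"
  define R5 where "R5 = R4 @ [VCat (Suc (Suc L)) (Suc (Suc (Suc L)))]"
  have l1: "length R1 = Suc L" "length R2 = Suc (Suc L)" "length R3 = Suc (Suc (Suc L))"
    "length R4 = Suc (Suc (Suc (Suc L)))"
    unfolding R1_def R2_def R3_def R4_def L_def by simp_all
  have c0: "gen R1 L (mk (2^Suc k) 1 (\<lambda>_ _. S0))"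
    unfolding R1_def L_def by (rule gen_vcat) (use g0 R_def in auto)
  have c1: "gen R2 (Suc L) (mk (2^Suc k) 1 (\<lambda>_ _. S1))"
    unfolding R2_def l1(1)[symmetric] by (rule gen_vcat) (use gen_ext[OF g1] R_def R1_def in auto)
  have gb2: "gen R2 ib (binp (Suc k))" using gen_ext[OF gb, of "[VCat i0 i0, VCat i1 i1]"] R_def R1_def R2_def by simp
  have h3: "gen R3 (Suc (Suc L)) (mk (2^Suc k) (Suc (Suc k)) (\<lambda>r c. if c < 1 then S0 else (if bit r (Suc k - 1 - (c - 1)) then S1 else S0)))"
    unfolding R3_def l1(2)[symmetric] by (rule gen_hcat[OF gen_ext[OF c0, of "[VCat i1 i1]", folded R2_def] gb2[unfolded binp_def]]) auto
  have h4: "gen R4 (Suc (Suc (Suc L))) (mk (2^Suc k) (Suc (Suc k)) (\<lambda>r c. if c < 1 then S1 else (if bit r (Suc k - 1 - (c - 1)) then S1 else S0)))"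
    unfolding R4_def l1(3)[symmetric] by (rule gen_hcat[OF gen_ext[OF c1, of "[HCat L ib]", folded R3_def] gen_ext[OF gb2, of "[HCat L ib]", folded R3_def, unfolded binp_def]]) auto
  have h5: "gen R5 (length R4) (binp (Suc (Suc k)))"
    unfolding R5_def binp_def
    apply (rule gen_vcat[OF gen_ext[OF h3, of "[HCat (Suc L) ib]", folded R4_def] h4])
    apply simp_all[3]
    apply (rule binp_pt; assumption)
    done
  have "R5 = rs @ (ts @ [VCat i0 i0, VCat i1 i1, HCat L ib, HCat (Suc L) ib, VCat (Suc (Suc L)) (Suc (Suc (Suc L)))])"
    unfolding R5_def R4_def R3_def R2_def R1_def R_def by simp
  moreover have "gen R5 L (mk (2^Suc k) 1 (\<lambda>_ _. S0))"
    unfolding R5_def R4_def R3_def using gen_ext[OF c0] R2_def by simp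
  moreover have "gen R5 (Suc L) (mk (2^Suc k) 1 (\<lambda>_ _. S1))"
    unfolding R5_def R4_def R3_def using gen_ext[OF c1] by simp
  ultimately show ?case using h5 l by (intro exI[of _ "ts @ [VCat i0 i0, VCat i1 i1, HCat L ib, HCat (Suc L) ib, VCat (Suc (Suc L)) (Suc (Suc (Suc L)))]"]) auto
qed


lemma binrow_nth: "c < n + 2 \<Longrightarrow> binrow n r ! c =
   (if c < Suc n then (if c < 1 then SD else (if bit r (n - 1 - (c - 1)) then S1 else S0)) else SD)"
  unfolding binrow_def bits_def by (auto simp: nth_append nth_Cons')

lemma bin_ex:
  assumes n: "n \<ge> 1"
  shows "\<exists>ts i. gen (rs @ ts) i (mk (2^n) (n + 2) (\<lambda>r c. binrow n r ! c)) \<and> length ts = 6 * n + 1"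
proof -
  obtain ts1 i1 where g1: "gen (rs @ ts1) i1 (mk (2^n) 1 (\<lambda>_ _. SD))" and l1: "length ts1 = n + 1"
    using col by blast
  obtain ts2 i0' i1' ib where gb: "gen ((rs @ ts1) @ ts2) ib (binp (Suc (n - 1)))" and l2: "length ts2 = 5 * (n - 1) + 3"
    using binp_ex[of "rs @ ts1" "n - 1"] by blast
  have sn: "Suc (n - 1) = n" using n by simp
  define R where "R = (rs @ ts1) @ ts2"
  have gd: "gen R i1 (mk (2^n) 1 (\<lambda>_ _. SD))" unfolding R_def by (rule gen_ext[OF g1])
  have gb': "gen R ib (mk (2^n) n (\<lambda>r c. if bit r (n - 1 - c) then S1 else S0))"
    using gb unfolding R_def binp_def sn .
  have h1: "gen (R @ [HCat i1 ib]) (length R) (mk (2^n) (Suc n) (\<lambda>r c. if c < 1 then SD else (if bit r (n - 1 - (c - 1)) then S1 else S0)))"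
    by (rule gen_hcat[OF gd gb']) auto
  have h2: "gen ((R @ [HCat i1 ib]) @ [HCat (length R) i1]) (length (R @ [HCat i1 ib])) (mk (2^n) (n + 2) (\<lambda>r c. binrow n r ! c))"
    apply (rule gen_hcat[OF h1 gen_ext[OF gd]])
     apply simp
    apply (simp only: binrow_nth)
    done
  show ?thesis
    apply (rule exI[of _ "ts1 @ ts2 @ [HCat i1 ib, HCat (length R) i1]"])
    apply (rule exI[of _ "length (R @ [HCat i1 ib])"])
    using h2 l1 l2 n unfolding R_def by simp
qed


definition SF :: "nat \<Rightarrow> nat \<Rightarrow> nat \<Rightarrow> sym" where
  "SF n r c = (let j = c div (n + 2); t = c mod (n + 2) in
     if j \<le> r \<and> r < j + 2^n then binrow n (r - j) ! t else S0)"

lemma SF_step: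
  assumes "r < 2^n + 2^Suc k"
  shows "SF n r c = (if c < 2^k * (n + 2) then (if r < 2^n + 2^k then SF n r c else S0)
            else (if r < 2^k then S0 else SF n (r - 2^k) (c - 2^k * (n + 2))))"
proof (cases "c < 2^k * (n + 2)")
  case True
  then have "c div (n + 2) < 2^k" by (simp add: less_mult_imp_div_less)
  then show ?thesis using True by (auto simp: SF_def Let_def)
next
  case False
  then obtain c' where c: "c = c' + 2^k * (n + 2)" by (metis add.commute le_add_diff_inverse not_less)
  have d: "c div (n + 2) = c' div (n + 2) + 2^k"
  proof -
    have "(c' + 2^k * (n + 2)) div (n + 2) = 2^k + c' div (n + 2)" by (rule div_mult_self1) simp
    then show ?thesis using c by simp
  qed
  have m: "c mod (n + 2) = c' mod (n + 2)"
  proof -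
    have "(c' + 2^k * (n + 2)) mod (n + 2) = c' mod (n + 2)" by (rule mod_mult_self1)
    then show ?thesis using c by simp
  qed
  show ?thesis
  proof (cases "r < 2^k")
    case True
    then show ?thesis using False d by (auto simp: SF_def Let_def)
  next
    case F2: False
    then obtain r' where r: "r = r' + 2^k" by (metis add.commute le_add_diff_inverse not_less)
    show ?thesis using False F2 d m unfolding SF_def Let_def r c by auto
  qed
qed

lemma X_ex:
  assumes gz: "gen rs iz (mk 1 (n + 2) (\<lambda>_ _. S0))"
    and gb: "gen rs ib (mk (2^n) (n + 2) (\<lambda>r c. binrow n r ! c))"
  shows "\<exists>ts ix iz'. gen (rs @ ts) ix (mk (2^n + 2^k) (2^k * (n + 2)) (SF n))
     \<and> gen (rs @ ts) iz' (mk (2^k) (2^k * (n + 2)) (\<lambda>_ _. S0)) \<and> length ts = 5 * k + 1"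
proof (induction k)
  case 0
  have "gen (rs @ [VCat ib iz]) (length rs) (mk (2^n + 1) (n + 2) (SF n))"
    apply (rule gen_vcat[OF gb gz])
    apply (auto simp: SF_def)
    done
  then show ?case using gen_ext[OF gz, of "[VCat ib iz]"]
    by (intro exI[of _ "[VCat ib iz]"] exI[of _ "length rs"] exI[of _ iz]) simp
next
  case (Suc k)
  then obtain ts ix iz' where gx: "gen (rs @ ts) ix (mk (2^n + 2^k) (2^k * (n + 2)) (SF n))"
     and gz': "gen (rs @ ts) iz' (mk (2^k) (2^k * (n + 2)) (\<lambda>_ _. S0))" and l: "length ts = 5 * k + 1"
    by blast
  define R where "R = rs @ ts"
  define L where "L = length R"
  define R1 where "R1 = R @ [VCat ix iz']"
  define R2 where "R2 = R1 @ [VCat iz' ix]"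
  define R3 where "R3 = R2 @ [HCat L (Suc L)]"
  define R4 where "R4 = R3 @ [HCat iz' iz']"
  define R5 where "R5 = R4 @ [VCat (Suc (Suc (Suc L))) (Suc (Suc (Suc L)))]"
  have l1: "length R1 = Suc L" "length R2 = Suc (Suc L)" "length R3 = Suc (Suc (Suc L))"
    "length R4 = Suc (Suc (Suc (Suc L)))"
    unfolding R1_def R2_def R3_def R4_def L_def by simp_all
  have gx1: "gen R ix (mk (2^n + 2^k) (2^k * (n + 2)) (SF n))" using gx R_def by simp
  have gz1: "gen R iz' (mk (2^k) (2^k * (n + 2)) (\<lambda>_ _. S0))" using gz' R_def by simp
  have a: "gen R1 L (mk (2^n + 2^Suc k) (2^k * (n + 2)) (\<lambda>r c. if r < 2^n + 2^k then SF n r c else S0))"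
    unfolding R1_def L_def by (rule gen_vcat[OF gx1 gz1]) auto
  have b: "gen R2 (Suc L) (mk (2^n + 2^Suc k) (2^k * (n + 2)) (\<lambda>r c. if r < 2^k then S0 else SF n (r - 2^k) c))"
    unfolding R2_def l1(1)[symmetric] 
    by (rule gen_vcat[OF gen_ext[OF gz1, of "[VCat ix iz']", folded R1_def] gen_ext[OF gx1, of "[VCat ix iz']", folded R1_def]]) auto
  have c: "gen R3 (Suc (Suc L)) (mk (2^n + 2^Suc k) (2^Suc k * (n + 2)) (SF n))"
    unfolding R3_def l1(2)[symmetric]
    apply (rule gen_hcat[OF gen_ext[OF a, of "[VCat iz' ix]", folded R2_def] b])
     apply simp
    apply (subst SF_step, assumption)
    apply simp
    done
  have d: "gen R4 (Suc (Suc (Suc L))) (mk (2^k) (2^Suc k * (n + 2)) (\<lambda>_ _. S0))"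
  proof -
    have gz3: "gen R3 iz' (mk (2^k) (2^k * (n + 2)) (\<lambda>_ _. S0))"
      using gen_ext[OF gz1, of "[VCat ix iz', VCat iz' ix, HCat L (Suc L)]"] R1_def R2_def R3_def by simp
    have "gen (R3 @ [HCat iz' iz']) (length R3) (mk (2^k) (2^Suc k * (n + 2)) (\<lambda>_ _. S0))"
      by (rule gen_hcat[OF gz3 gz3]) auto
    then show ?thesis unfolding R4_def l1(3) .
  qed
  have e: "gen R5 (length R4) (mk (2^Suc k) (2^Suc k * (n + 2)) (\<lambda>_ _. S0))"
    unfolding R5_def by (rule gen_vcat[OF d d]) auto
  have "R5 = rs @ (ts @ [VCat ix iz', VCat iz' ix, HCat L (Suc L), HCat iz' iz', VCat (Suc (Suc (Suc L))) (Suc (Suc (Suc L)))])"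
    unfolding R5_def R4_def R3_def R2_def R1_def R_def by simp
  moreover have "gen R5 (Suc (Suc L)) (mk (2^n + 2^Suc k) (2^Suc k * (n + 2)) (SF n))"
    unfolding R5_def R4_def using gen_ext[OF c] by simp
  ultimately show ?case using e l
    by (intro exI[of _ "ts @ [VCat ix iz', VCat iz' ix, HCat L (Suc L), HCat iz' iz', VCat (Suc (Suc (Suc L))) (Suc (Suc (Suc L)))]"]
      exI[of _ "Suc (Suc L)"] exI[of _ "length R4"]) simp
qed


lemma ShiftBin_mk: "ShiftBin n = mk (2^n + 2^n) (2^n * (n + 2)) (SF n)"
  unfolding ShiftBin_def mk_def SF_def by (simp add: mult_2)

theorem mainTheorem5:
  shows "\<exists>c::real > 0. \<forall>n::nat \<ge> 1. \<exists>rs S. S < length rs \<and>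
           expand rs S = Some (ShiftBin n) \<and> real (length rs) \<le> c * real n"
proof (intro exI[of _ 20] conjI allI impI)
  fix n :: nat
  assume n: "n \<ge> 1"
  obtain ts1 iz where gz: "gen ([] @ ts1) iz (mk 1 (Suc (n + 1)) (\<lambda>_ _. S0))" and l1: "length ts1 = 2 * (n + 1) + 1"
    using zrow by blast
  obtain ts2 ib where gb: "gen (ts1 @ ts2) ib (mk (2^n) (n + 2) (\<lambda>r c. binrow n r ! c))" and l2: "length ts2 = 6 * n + 1"
    using bin_ex[OF n] by blast
  have gz2: "gen (ts1 @ ts2) iz (mk 1 (n + 2) (\<lambda>_ _. S0))" using gen_ext[OF gz, of ts2] by simp
  obtain ts3 ix iz' where gx: "gen ((ts1 @ ts2) @ ts3) ix (mk (2^n + 2^n) (2^n * (n + 2)) (SF n))"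
    and l3: "length ts3 = 5 * n + 1"
    using X_ex[OF gz2 gb, of n] by blast
  have len: "length ((ts1 @ ts2) @ ts3) = 13 * n + 5" using l1 l2 l3 by simp
  show "\<exists>rs S. S < length rs \<and> expand rs S = Some (ShiftBin n) \<and> real (length rs) \<le> 20 * real n"
    apply (rule exI[of _ "(ts1 @ ts2) @ ts3"])
    apply (rule exI[of _ ix])
    using gx len n unfolding gen_def ShiftBin_mk by simp
qed simp

end
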